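(* Let $\mu$ be a probability measure on $\mathbb{R}^p$ supported on a compact set $S$ such that $\mathrm{diam}(\mathrm{conv}(S))>0$. Then for every positive integer $d$ and every $\mathbf{x}\in\mathbb{R}^p$, \[\Lambda_{\mu,d}(\mathbf{x})\le\left(\frac{\mathrm{diam}(\mathrm{conv}(S))}{\mathrm{dist}(\mathbf{x},\mathrm{conv}(S))+\mathrm{diam}(\mathrm{conv}(S))}\right)^2.\]
   Context: $\mathrm{conv}(S)$ is the convex hull of $S$ and $\mathrm{diam}$ the diameter. For a finite Borel measure $\nu$ with finite moments, the Christoffel function is $\Lambda_{\nu,d}(\xi)=\min\{\int P^2\,d\nu: P\in\mathbb{R}[X]_d,\ P(\xi)=1\}$, where $\mathbb{R}[X]_d$ is the space of real polynomials in $p$ variables of total degree at most $d$. *)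

theory Defs
  imports "HOL-Analysis.Analysis" "HOL-Probability.Probability"
begin

definition monomial_exps :: "nat \<Rightarrow> ('n::finite \<Rightarrow> nat) set" where
  "monomial_exps d = {\<alpha>. (\<Sum>i\<in>UNIV. \<alpha> i) \<le> d}"

definition polys_deg :: "nat \<Rightarrow> (real ^ 'n::finite \<Rightarrow> real) set" where
  "polys_deg d = {P. \<exists>c :: ('n \<Rightarrow> nat) \<Rightarrow> real.
      P = (\<lambda>x. \<Sum>\<alpha>\<in>monomial_exps d. c \<alpha> * (\<Prod>i\<in>UNIV. (x $ i) ^ (\<alpha> i)))}"

definition christoffel :: "(real ^ 'n::finite) measure \<Rightarrow> nat \<Rightarrow> real ^ 'n \<Rightarrow> real" where
  "christoffel M d \<xi> = Inf {(\<integral>x. (P x)\<^sup>2 \<partial>M) | P. P \<in> polys_deg d \<and> P \<xi> = 1}"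

end

theory Submission
  imports Defs
begin

lemma finite_monomial_exps: "finite (monomial_exps d :: ('n::finite \<Rightarrow> nat) set)"
proof (rule finite_subset)
  show "monomial_exps d \<subseteq> (PiE UNIV (\<lambda>_. {..d}) :: ('n \<Rightarrow> nat) set)"
  proof
    fix \<alpha> :: "'n \<Rightarrow> nat" assume "\<alpha> \<in> monomial_exps d"
    hence h: "(\<Sum>i\<in>UNIV. \<alpha> i) \<le> d" by (simp add: monomial_exps_def)
    have "\<alpha> i \<le> d" for i
    proof -
      have "\<alpha> i \<le> (\<Sum>i\<in>UNIV. \<alpha> i)" by (rule member_le_sum) auto
      thus ?thesis using h by linarith
    qed
    thus "\<alpha> \<in> PiE UNIV (\<lambda>_. {..d})" by (simp add: PiE_UNIV_domain)
  qed
  show "finite (PiE UNIV (\<lambda>_. {..d}) :: ('n \<Rightarrow> nat) set)"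
    by (rule finite_PiE) auto
qed

lemma affine_poly:
  fixes a :: "real ^ 'n::finite" and b :: real
  assumes "d \<ge> 1"
  shows "(\<lambda>z. inner a z + b) \<in> polys_deg d"
proof -
  define e :: "'n \<Rightarrow> 'n \<Rightarrow> nat" where "e i = (\<lambda>j. if j = i then 1 else 0)" for i
  define F where "F = (monomial_exps d :: ('n \<Rightarrow> nat) set)"
  have finF: "finite F" unfolding F_def by (rule finite_monomial_exps)
  have zF: "(\<lambda>_. 0) \<in> F" by (simp add: F_def monomial_exps_def)
  have eF: "e i \<in> F" for i
  proof -
    have "(\<Sum>j\<in>UNIV. e i j) = 1" unfolding e_def by simp
    thus ?thesis using assms by (simp add: F_def monomial_exps_def)
  qed
  have e0: "e i \<noteq> (\<lambda>_. 0)" for i unfolding e_def by (metis one_neq_zero)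
  have mon_e: "(\<Prod>j\<in>UNIV. (z $ j) ^ (e i j)) = z $ i" for z :: "real ^ 'n" and i
  proof -
    have "(\<Prod>j\<in>UNIV. (z $ j) ^ (e i j)) = (\<Prod>j\<in>UNIV. if j = i then z $ j else 1)"
      unfolding e_def by (rule prod.cong) auto
    also have "\<dots> = z $ i" by (subst prod.delta) auto
    finally show ?thesis .
  qed
  define c where "c \<alpha> = (if \<alpha> = (\<lambda>_. 0) then b else (\<Sum>i\<in>UNIV. if \<alpha> = e i then a $ i else 0))" for \<alpha>
  have key: "c \<alpha> * (\<Prod>j\<in>UNIV. (z $ j) ^ (\<alpha> j)) =
      (if \<alpha> = (\<lambda>_. 0) then b else 0) + (\<Sum>i\<in>UNIV. if \<alpha> = e i then a $ i * z $ i else 0)"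
    for \<alpha> z
  proof (cases "\<alpha> = (\<lambda>_. 0)")
    case True thus ?thesis using e0 by (simp add: c_def eq_commute[of "\<lambda>_. 0"])
  next
    case False
    have "c \<alpha> * (\<Prod>j\<in>UNIV. (z $ j) ^ (\<alpha> j)) =
        (\<Sum>i\<in>UNIV. (if \<alpha> = e i then a $ i else 0) * (\<Prod>j\<in>UNIV. (z $ j) ^ (\<alpha> j)))"
      using False by (simp add: c_def sum_distrib_right)
    also have "\<dots> = (\<Sum>i\<in>UNIV. if \<alpha> = e i then a $ i * z $ i else 0)"
      by (rule sum.cong) (auto simp: mon_e)
    finally show ?thesis using False by simp
  qed
  have "(\<Sum>\<alpha>\<in>F. c \<alpha> * (\<Prod>j\<in>UNIV. (z $ j) ^ (\<alpha> j))) = inner a z + b" for z :: "real ^ 'n"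
  proof -
    have "(\<Sum>\<alpha>\<in>F. c \<alpha> * (\<Prod>j\<in>UNIV. (z $ j) ^ (\<alpha> j))) =
        (\<Sum>\<alpha>\<in>F. if \<alpha> = (\<lambda>_. 0) then b else 0) + (\<Sum>\<alpha>\<in>F. \<Sum>i\<in>UNIV. if \<alpha> = e i then a $ i * z $ i else 0)"
      by (simp add: key sum.distrib)
    also have "(\<Sum>\<alpha>\<in>F. if \<alpha> = (\<lambda>_. 0) then b else 0) = b"
      using finF zF by (simp add: sum.delta)
    also have "(\<Sum>\<alpha>\<in>F. \<Sum>i\<in>UNIV. if \<alpha> = e i then a $ i * z $ i else 0)
        = (\<Sum>i\<in>UNIV. \<Sum>\<alpha>\<in>F. if \<alpha> = e i then a $ i * z $ i else 0)"
      by (rule sum.swap)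
    also have "\<dots> = (\<Sum>i\<in>UNIV. a $ i * z $ i)"
      using finF eF by (simp add: sum.delta')
    also have "\<dots> = inner a z" by (simp add: inner_vec_def)
    finally show ?thesis by simp
  qed
  thus ?thesis unfolding polys_deg_def F_def
    by (intro CollectI exI[of _ c]) (auto simp: fun_eq_iff)
qed

lemma christoffel_le:
  fixes M :: "(real ^ 'n::finite) measure" and P :: "real ^ 'n \<Rightarrow> real"
  assumes "prob_space M" "P \<in> polys_deg d" "P \<xi> = 1"
    and "AE z in M. (P z)\<^sup>2 \<le> B" "B \<ge> 0"
  shows "christoffel M d \<xi> \<le> B"
proof -
  interpret prob_space M by fact
  let ?X = "{(\<integral>x. (P x)\<^sup>2 \<partial>M) | P. P \<in> polys_deg d \<and> P \<xi> = 1}"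
  have bdd: "bdd_below ?X"
    by (rule bdd_belowI[of _ 0]) auto
  have mem: "(\<integral>x. (P x)\<^sup>2 \<partial>M) \<in> ?X" using assms(2,3) by blast
  have "(\<integral>x. (P x)\<^sup>2 \<partial>M) \<le> B"
  proof (cases "integrable M (\<lambda>x. (P x)\<^sup>2)")
    case True
    have "(\<integral>x. (P x)\<^sup>2 \<partial>M) \<le> (\<integral>x. B \<partial>M)"
      by (rule integral_mono_AE[OF True _ assms(4)]) simp
    also have "\<dots> = B" by (simp add: prob_space)
    finally show ?thesis .
  next
    case False thus ?thesis using assms(5) by (simp add: not_integrable_integral_eq)
  qed
  moreover have "christoffel M d \<xi> \<le> (\<integral>x. (P x)\<^sup>2 \<partial>M)"
    unfolding christoffel_def by (rule cInf_lower[OF mem bdd])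
  ultimately show ?thesis by linarith
qed

theorem lemma6p8:
  fixes M :: "(real ^ 'n::finite) measure" and S :: "(real ^ 'n) set"
    and d :: nat and x :: "real ^ 'n"
  assumes "prob_space M"
    and "sets M = sets borel"
    and "compact S"
    and "emeasure M (UNIV - S) = 0"
    and "diameter (convex hull S) > 0"
    and "d \<ge> 1"
  shows "christoffel M d x \<le>
    (diameter (convex hull S) / (infdist x (convex hull S) + diameter (convex hull S)))\<^sup>2"
proof -
  define C where "C = convex hull S"
  define D where "D = diameter C"
  define \<delta> where "\<delta> = infdist x C"
  have D0: "D > 0" using assms(5) by (simp add: D_def C_def)
  have cC: "compact C" unfolding C_def by (rule compact_convex_hull[OF assms(3)])
  have clC: "closed C" using cC by (rule compact_imp_closed)
  have bC: "bounded C" using cC by (rule compact_imp_bounded)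
  have cvC: "convex C" unfolding C_def by simp
  have SC: "S \<subseteq> C" unfolding C_def by (rule hull_subset)
  have Cne: "C \<noteq> {}" using D0 by (auto simp: D_def)
  define y where "y = closest_point C x"
  have yC: "y \<in> C" unfolding y_def by (rule closest_point_in_set[OF clC Cne])
  define r where "r = dist x y"
  have dle: "\<delta> \<le> r" unfolding \<delta>_def r_def by (rule infdist_le[OF yC])
  have d0: "\<delta> \<ge> 0" unfolding \<delta>_def by (rule infdist_nonneg)
  have AES: "AE z in M. z \<in> S"
  proof -
    interpret prob_space M by fact
    have "UNIV - S \<in> sets M" using assms(2) compact_imp_closed[OF assms(3)] by auto
    thus ?thesis using assms(4) by (intro AE_I[of _ _ "UNIV - S"]) auto
  qed
  let ?B = "(D / (\<delta> + D))\<^sup>2"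
  have "christoffel M d x \<le> ?B"
  proof (cases "r = 0")
    case True
    hence "\<delta> = 0" using dle d0 by simp
    hence B1: "?B = 1" using D0 by simp
    have "(\<lambda>z. inner 0 z + 1) \<in> polys_deg d" by (rule affine_poly[OF assms(6)])
    hence P: "(\<lambda>z. 1::real) \<in> polys_deg d" by simp
    show ?thesis unfolding B1 by (rule christoffel_le[OF assms(1) P]) auto
  next
    case False
    hence r0: "r > 0" unfolding r_def by simp
    define u where "u = x - y"
    have nu: "norm u = r" unfolding u_def r_def by (simp add: dist_norm)
    define K where "K = r\<^sup>2 + D * r"
    have K0: "K > 0" unfolding K_def using r0 D0 by (simp add: add_pos_pos)
    define P where "P z = (inner (z - y) u + D * r) / K" for z
    have Paff: "P = (\<lambda>z. inner (u /\<^sub>R K) z + (D * r - inner y u) / K)"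
      unfolding P_def using K0 by (auto simp: fun_eq_iff inner_diff_left inner_diff_right inner_commute add_divide_distrib diff_divide_distrib divide_inverse algebra_simps)
    have Ppoly: "P \<in> polys_deg d" unfolding Paff by (rule affine_poly[OF assms(6)])
    have Px: "P x = 1"
      using K0 unfolding P_def K_def by (simp add: u_def[symmetric] nu power2_norm_eq_inner[symmetric] power2_eq_square)
    have bnd: "(P z)\<^sup>2 \<le> ?B" if zC: "z \<in> C" for z
    proof -
      have up: "inner (z - y) u \<le> 0"
        using closest_point_dot[OF cvC clC zC, of x] unfolding u_def y_def by (simp add: inner_commute)
      have "\<bar>inner (z - y) u\<bar> \<le> norm (z - y) * norm u" by (rule Cauchy_Schwarz_ineq2)
      moreover have "norm (z - y) \<le> D"
        using diameter_bounded_bound[OF bC zC yC] unfolding D_def by (simp add: dist_norm)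
      ultimately have lo: "inner (z - y) u \<ge> - (D * r)"
      proof -
        assume a1: "\<bar>inner (z - y) u\<bar> \<le> norm (z - y) * norm u" and a2: "norm (z - y) \<le> D"
        have "norm (z - y) * r \<le> D * r" using a2 r0 by (simp add: mult_right_mono)
        moreover have "\<bar>inner (z - y) u\<bar> \<le> norm (z - y) * r" using a1 nu by simp
        ultimately show ?thesis by (simp add: abs_le_iff)
      qed
      have P0: "P z \<ge> 0" unfolding P_def using lo K0 by simp
      have "P z \<le> D * r / K" unfolding P_def using up K0 by (simp add: divide_right_mono)
      also have "D * r / K = D / (r + D)"
      proof -
        have "K = (r + D) * r" unfolding K_def by (simp add: power2_eq_square algebra_simps)
        thus ?thesis using r0 by simp
      qed
      also have "\<dots> \<le> D / (\<delta> + D)" using D0 d0 dle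
        by (intro divide_left_mono) (auto simp: mult_pos_pos add_nonneg_pos)
      finally have "P z \<le> D / (\<delta> + D)" .
      thus ?thesis using P0 by (simp add: power_mono)
    qed
    show ?thesis
      by (rule christoffel_le[OF assms(1) Ppoly Px]) (use AES SC bnd in auto)
  qed
  thus ?thesis unfolding D_def \<delta>_def C_def .
qed

end
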